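(* Let $B,B'$ be sets of vincular patterns, $p\in S_k$ and $R\subseteq[k]$. If $R$ is reversibly deletable for $p$ with respect to $B$ and also with respect to $B'$, then $R$ is reversibly deletable for $p$ with respect to $B\cup B'$.
   Context: A vincular pattern $(\sigma,X)$, $\sigma\in S_\ell$, $X\subseteq[\ell-1]$, is contained in $\pi$ if some subsequence $\pi_{i_1}\cdots\pi_{i_\ell}$ ($i_1<\dots<i_\ell$) is order-isomorphic to $\sigma$ with $i_{x+1}=i_x+1$ for $x\in X$. For $p\in S_k$ and $w\in[n]^k$ with distinct letters order-isomorphic to $p$, $S_n^B(p;w)$ is the set of $B$-avoiding $\pi\in S_n$ with $\pi_i=w_i$ ($i\le k$). $d_R(\pi)$ deletes the entries of $\pi$ in positions in $R$ and reduces to a permutation; for words $d_R(w)$ deletes $w_r$ ($r\in R$) and subtracts from each remaining $w_i$ the number of $r\in R$ with $w_r<w_i$. $R$ is reversibly deletable for $p$ w.r.t. $B$ if for every $n$ and every such $w$ with $S_n^B(p;w)\ne\emptyset$, $d_R$ restricts to a bijection $S_n^B(p;w)\to S_{n-|R|}^B(d_R(p);d_R(w))$. *)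

theory Defs
  imports Main
begin

text \<open>Permutations of [n] and words are lists; values are 1-based (a permutation
of [n] is a list with distinct entries forming {1..n}); list position i (0-based)
corresponds to position i+1 of the paper.\<close>

definition perm_of :: "nat \<Rightarrow> nat list \<Rightarrow> bool" where
  "perm_of n \<pi> \<longleftrightarrow> distinct \<pi> \<and> set \<pi> = {1..n}"

definition order_iso :: "nat list \<Rightarrow> nat list \<Rightarrow> bool" where
  "order_iso u v \<longleftrightarrow> length u = length v \<and>
     (\<forall>i<length u. \<forall>j<length u. (u!i < u!j) = (v!i < v!j))"

type_synonym vpattern = "nat list \<times> nat set"

definition vincular :: "vpattern \<Rightarrow> bool" where
  "vincular P \<longleftrightarrow> perm_of (length (fst P)) (fst P) \<and> snd P \<subseteq> {1..<length (fst P)}"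

text \<open>Containment: indices idx (0-based, strictly increasing) with the subsequence
order-isomorphic to sigma and i_{x+1} = i_x + 1 for x in X (1-based x).\<close>
definition contains :: "nat list \<Rightarrow> vpattern \<Rightarrow> bool" where
  "contains \<pi> P \<longleftrightarrow> (\<exists>idx. length idx = length (fst P) \<and> sorted_wrt (<) idx \<and>
      (\<forall>i\<in>set idx. i < length \<pi>) \<and>
      order_iso (map (\<lambda>i. \<pi>!i) idx) (fst P) \<and>
      (\<forall>x\<in>snd P. 1 \<le> x \<longrightarrow> x < length (fst P) \<longrightarrow> idx!x = idx!(x-1) + 1))"

definition avoids :: "nat list \<Rightarrow> vpattern set \<Rightarrow> bool" where
  "avoids \<pi> B \<longleftrightarrow> (\<forall>P\<in>B. \<not> contains \<pi> P)"

definition Sset :: "nat \<Rightarrow> vpattern set \<Rightarrow> nat list \<Rightarrow> nat list \<Rightarrow> nat list set" where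
  "Sset n B p w = {\<pi>. perm_of n \<pi> \<and> avoids \<pi> B \<and> (\<forall>i<length p. \<pi>!i = w!i)}"

definition adm_word :: "nat \<Rightarrow> nat list \<Rightarrow> nat list \<Rightarrow> bool" where
  "adm_word n p w \<longleftrightarrow> length w = length p \<and> set w \<subseteq> {1..n} \<and> distinct w \<and> order_iso w p"

text \<open>For permutations this is deletion followed by reduction.\<close>
definition dR :: "nat set \<Rightarrow> nat list \<Rightarrow> nat list" where
  "dR R w = map (\<lambda>i. w!i - card {r \<in> R. 1 \<le> r \<and> r \<le> length w \<and> w!(r-1) < w!i})
              (filter (\<lambda>i. Suc i \<notin> R) [0..<length w])"

definition rev_deletable :: "nat set \<Rightarrow> nat list \<Rightarrow> vpattern set \<Rightarrow> bool" where
  "rev_deletable R p B \<longleftrightarrow> (\<forall>n w. adm_word n p w \<and> Sset n B p w \<noteq> {} \<longrightarrow>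
      bij_betw (dR R) (Sset n B p w) (Sset (n - card R) B (dR R p) (dR R w)))"

end

theory Submission
  imports Defs
begin

lemma key_card:
  fixes D :: "nat set"
  assumes fin: "finite D" and D0: "0 \<notin> D" and v: "v \<notin> D" and v': "v' \<notin> D"
    and eq: "v - card {d\<in>D. d<v} = v' - card {d\<in>D. d<v'}"
  shows "v = v'"
proof -
  have h: "card ({1..x}-D) = x - card {d\<in>D. d<x}" if "x \<notin> D" for x
  proof -
    have "{1..x} \<inter> D = {d\<in>D. d<x}" using that D0
      by (auto simp: Suc_le_eq; metis le_neq_implies_less gr0I)
    moreover have "card ({1..x}-D) = card {1..x} - card ({1..x} \<inter> D)"
      by (rule card_Diff_subset_Int) simp
    ultimately show ?thesis by simp
  qed
  have lt: "card ({1..a}-D) < card ({1..b}-D)" if "a < b" "b \<notin> D" for a b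
  proof (rule psubset_card_mono)
    show "finite ({1..b} - D)" by simp
    have "b \<in> {1..b} - D" "b \<notin> {1..a} - D" using that by auto
    moreover have "{1..a} - D \<subseteq> {1..b} - D" using that by auto
    ultimately show "{1..a} - D \<subset> {1..b} - D" by blast
  qed
  show ?thesis
  proof (rule ccontr)
    assume "v \<noteq> v'"
    then consider "v < v'" | "v' < v" by linarith
    then show False using lt[of v v'] lt[of v' v] h[OF v] h[OF v'] eq v v' by cases auto
  qed
qed

lemma perm_len: "perm_of n \<pi> \<Longrightarrow> length \<pi> = n"
  unfolding perm_of_def by (metis card_atLeastAtMost diff_Suc_1 distinct_card)

lemma dR_inj:
  assumes pi: "perm_of n \<pi>" and pi': "perm_of n \<pi>'" and Rk: "R \<subseteq> {1..k}" and kn: "k \<le> n"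
   and pre: "\<forall>i<k. \<pi>!i = \<pi>'!i" and eq: "dR R \<pi> = dR R \<pi>'"
  shows "\<pi> = \<pi>'"
proof -
  have l: "length \<pi> = n" "length \<pi>' = n" using pi pi' perm_len by auto
  have Rk': "\<And>r. r \<in> R \<Longrightarrow> 1 \<le> r \<and> r \<le> k" using Rk by (meson atLeastAtMost_iff subsetD)
  define D where "D = (\<lambda>r. \<pi>!(r-1)) ` R"
  have D': "D = (\<lambda>r. \<pi>'!(r-1)) ` R" unfolding D_def
  proof (rule image_cong[OF refl])
    fix r assume "r \<in> R" then have "r \<in> {1..k}" using Rk by blast
    then have "r - 1 < k" by auto
    then show "\<pi>!(r-1) = \<pi>'!(r-1)" using pre by auto
  qed
  have finD: "finite D" unfolding D_def using Rk finite_subset by blast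
  have D0: "0 \<notin> D"
  proof
    assume "0 \<in> D"
    then obtain r where r: "r \<in> R" "\<pi>!(r-1) = 0" unfolding D_def by auto
    then have "r - 1 < n" using Rk'[OF r(1)] kn by auto
    then have "\<pi>!(r-1) \<in> {1..n}" using pi l unfolding perm_of_def by (metis nth_mem)
    then show False using r by simp
  qed
  have cnt: "card {r\<in>R. 1\<le>r \<and> r\<le>length \<rho> \<and> \<rho>!(r-1) < v} = card {d\<in>D. d<v}"
    if rho: "perm_of n \<rho>" and DD: "D = (\<lambda>r. \<rho>!(r-1)) ` R" for \<rho> v
  proof -
    have lr: "length \<rho> = n" using rho perm_len by auto
    have dr: "distinct \<rho>" using rho unfolding perm_of_def by auto
    have s1: "{r\<in>R. 1\<le>r \<and> r\<le>length \<rho> \<and> \<rho>!(r-1) < v} = {r\<in>R. \<rho>!(r-1) < v}"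
      using kn lr by (auto dest: Rk')
    have s2: "{d\<in>D. d<v} = (\<lambda>r. \<rho>!(r-1)) ` {r\<in>R. \<rho>!(r-1) < v}" using DD by auto
    have inj: "inj_on (\<lambda>r. \<rho>!(r-1)) {r\<in>R. \<rho>!(r-1) < v}"
    proof (rule inj_onI)
      fix r r' assume a: "r \<in> {r\<in>R. \<rho>!(r-1) < v}" "r' \<in> {r\<in>R. \<rho>!(r-1) < v}"
        "\<rho>!(r-1) = \<rho>!(r'-1)"
      then have "r-1 < length \<rho>" "r'-1 < length \<rho>" "r \<ge> 1" "r' \<ge> 1" using Rk'[of r] Rk'[of r'] a kn lr by auto
      then show "r = r'" using a(3) dr nth_eq_iff_index_eq by fastforce
    qed
    show ?thesis unfolding s1 s2 using card_image[OF inj] by simp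
  qed
  have nm: "\<forall>x\<in>set (filter (\<lambda>i. Suc i \<notin> R) [0..<n]).
     \<pi>!x - card {r\<in>R. 1\<le>r \<and> r\<le>length \<pi> \<and> \<pi>!(r-1) < \<pi>!x}
     = \<pi>'!x - card {r\<in>R. 1\<le>r \<and> r\<le>length \<pi>' \<and> \<pi>'!(r-1) < \<pi>'!x}"
    using eq unfolding dR_def l map_eq_conv by simp
  have notin: "\<rho>!i \<notin> (\<lambda>r. \<rho>!(r-1)) ` R"
    if "perm_of n \<rho>" "i < n" "Suc i \<notin> R" for \<rho> i
  proof
    assume "\<rho>!i \<in> (\<lambda>r. \<rho>!(r-1)) ` R"
    then obtain r where r: "r \<in> R" "\<rho>!i = \<rho>!(r-1)" by auto
    have "r - 1 < n" "r \<ge> 1" using r Rk'[OF r(1)] kn by auto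
    moreover have "distinct \<rho>" "length \<rho> = n" using that perm_len unfolding perm_of_def by auto
    ultimately have "i = r - 1" using r that nth_eq_iff_index_eq by metis
    then show False using r that \<open>r \<ge> 1\<close> by (metis Suc_pred' less_eq_Suc_le Suc_le_eq One_nat_def)
  qed
  show ?thesis
  proof (rule nth_equalityI)
    show "length \<pi> = length \<pi>'" using l by simp
    fix i assume i: "i < length \<pi>"
    show "\<pi>!i = \<pi>'!i"
    proof (cases "Suc i \<in> R")
      case True then show ?thesis using Rk'[OF True] pre by auto
    next
      case False
      then have "\<pi>!i - card {d\<in>D. d<\<pi>!i} = \<pi>'!i - card {d\<in>D. d<\<pi>'!i}"
        using nm i l cnt[OF pi D_def] cnt[OF pi' D'] by auto
      moreover have "\<pi>!i \<notin> D" using notin[OF pi _ False] i l D_def by auto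
      moreover have "\<pi>'!i \<notin> D" using notin[OF pi' _ False] i l D' by auto
      ultimately show ?thesis using key_card finD D0 by blast
    qed
  qed
qed

theorem mainTheorem9:
  fixes B B' :: "vpattern set" and p :: "nat list" and R :: "nat set"
  assumes "\<forall>P\<in>B. vincular P" and "\<forall>P\<in>B'. vincular P"
    and "perm_of (length p) p" and "R \<subseteq> {1..length p}"
    and "rev_deletable R p B" and "rev_deletable R p B'"
  shows "rev_deletable R p (B \<union> B')"
  unfolding rev_deletable_def
proof (intro allI impI)
  fix n w assume a: "adm_word n p w \<and> Sset n (B \<union> B') p w \<noteq> {}"
  have un: "\<And>m q u. Sset m (B \<union> B') q u = Sset m B q u \<inter> Sset m B' q u"
    unfolding Sset_def avoids_def by auto
  have ne: "Sset n B p w \<noteq> {}" "Sset n B' p w \<noteq> {}" using a un by auto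
  have b1: "bij_betw (dR R) (Sset n B p w) (Sset (n - card R) B (dR R p) (dR R w))"
    using assms(5) a ne unfolding rev_deletable_def by blast
  have b2: "bij_betw (dR R) (Sset n B' p w) (Sset (n - card R) B' (dR R p) (dR R w))"
    using assms(6) a ne unfolding rev_deletable_def by blast
  have kn: "length p \<le> n"
  proof -
    have "length w = card (set w)" using a unfolding adm_word_def by (simp add: distinct_card)
    also have "\<dots> \<le> card {1..n}" using a unfolding adm_word_def by (intro card_mono) auto
    finally show ?thesis using a unfolding adm_word_def by simp
  qed
  show "bij_betw (dR R) (Sset n (B \<union> B') p w) (Sset (n - card R) (B \<union> B') (dR R p) (dR R w))"
    unfolding un
  proof (rule bij_betw_imageI)
    show "inj_on (dR R) (Sset n B p w \<inter> Sset n B' p w)"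
      using bij_betw_imp_inj_on[OF b1] inj_on_subset by blast
    show "dR R ` (Sset n B p w \<inter> Sset n B' p w) =
      Sset (n - card R) B (dR R p) (dR R w) \<inter> Sset (n - card R) B' (dR R p) (dR R w)"
    proof
      show "dR R ` (Sset n B p w \<inter> Sset n B' p w) \<subseteq>
        Sset (n - card R) B (dR R p) (dR R w) \<inter> Sset (n - card R) B' (dR R p) (dR R w)"
        using bij_betw_imp_surj_on[OF b1] bij_betw_imp_surj_on[OF b2] by (metis image_Int_subset)
    next
      show "Sset (n - card R) B (dR R p) (dR R w) \<inter> Sset (n - card R) B' (dR R p) (dR R w)
        \<subseteq> dR R ` (Sset n B p w \<inter> Sset n B' p w)"
      proof
        fix \<sigma> assume s: "\<sigma> \<in> Sset (n - card R) B (dR R p) (dR R w) \<inter> Sset (n - card R) B' (dR R p) (dR R w)"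
        obtain \<pi>1 where p1: "\<pi>1 \<in> Sset n B p w" "dR R \<pi>1 = \<sigma>"
        proof -
          have "\<sigma> \<in> dR R ` Sset n B p w" using s bij_betw_imp_surj_on[OF b1] by simp
          then show ?thesis using that by (elim imageE) metis
        qed
        obtain \<pi>2 where p2: "\<pi>2 \<in> Sset n B' p w" "dR R \<pi>2 = \<sigma>"
        proof -
          have "\<sigma> \<in> dR R ` Sset n B' p w" using s bij_betw_imp_surj_on[OF b2] by simp
          then show ?thesis using that by (elim imageE) metis
        qed
        have "\<pi>1 = \<pi>2"
          by (rule dR_inj[of n \<pi>1 \<pi>2 R "length p"]) (use p1 p2 assms(4) kn in \<open>auto simp: Sset_def\<close>)
        then show "\<sigma> \<in> dR R ` (Sset n B p w \<inter> Sset n B' p w)" using p1 p2 by blast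
      qed
    qed
  qed
qed

end
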